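(* The assignment $H_3\mapsto E^2$, $H_1\mapsto\tilde B E$, $C_{18}\mapsto \mathrm{diag}(e^{-7i\pi/9},e^{2i\pi/9},e^{5i\pi/9})$, $C_6\mapsto\mathrm{diag}(e^{i\pi/3},-1,e^{2i\pi/3})$ extends to a group isomorphism $g:Fr(162\times 4)\to D(18,1,1;2,1,1)$. (In terms of generators, $g(C_{18})=F^2(E^2FEF^{-1})^3$ and $g(C_6)=E\,g(C_{18})E^{-2}g(C_{18})^8E^{-2}g(C_{18})^3$.) In particular $Fr(162\times 4)\cong D(18,1,1;2,1,1)$.
   Context: Let $\omega=e^{2i\pi/3}$, $J$ the $3\times3$ antidiagonal matrix with antidiagonal entries $1$. $G_1=\mathrm{diag}(e^{7i\pi/9},-e^{4i\pi/9},-e^{7i\pi/9})$, $G_2=\begin{pmatrix}-\tfrac12 e^{4i\pi/9}&\tfrac{1}{\sqrt2}e^{7i\pi/9}&\tfrac12 e^{4i\pi/9}\\ \tfrac{1}{\sqrt2}e^{7i\pi/9}&0&\tfrac{1}{\sqrt2}e^{7i\pi/9}\\ \tfrac12 e^{4i\pi/9}&\tfrac{1}{\sqrt2}e^{7i\pi/9}&-\tfrac12 e^{4i\pi/9}\end{pmatrix}$, $FUM=-\omega J$, $Fr(162\times 4)=\langle G_1,G_2,FUM\rangle\subset SU(3)$. Let $A=G_1G_2^2G_1^{-1}$, $B=G_1G_2^{-2}G_1$, $C_{18}=A(FUM)^3$, $C_6=B\,G_1(FUM)^3G_1^{-1}$, $H_1=\begin{pmatrix}-\frac12&-\frac1{\sqrt2}&-\frac12\\-\frac1{\sqrt2}&0&\frac1{\sqrt2}\\-\frac12&\frac1{\sqrt2}&-\frac12\end{pmatrix}$,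 $H_3=\begin{pmatrix}\frac12&\frac1{\sqrt2}&-\frac12\\\frac1{\sqrt2}&0&\frac1{\sqrt2}\\\frac12&-\frac1{\sqrt2}&-\frac12\end{pmatrix}$; $C_6,C_{18},H_1,H_3$ generate $Fr(162\times4)$. $D(18,1,1;2,1,1)=\langle F,E,\tilde B\rangle\subset SU(3)$ with $F=\mathrm{diag}(e^{i\pi/9},e^{i\pi/9},e^{-2i\pi/9})$, $E=\begin{pmatrix}0&1&0\\0&0&1\\1&0&0\end{pmatrix}$, $\tilde B=\begin{pmatrix}-1&0&0\\0&0&-1\\0&-1&0\end{pmatrix}$. *)

theory Defs
  imports "HOL-Analysis.Analysis" "HOL-Algebra.Group"
begin

type_synonym cmat = "complex^3^3"

definition mat3 :: "complex \<Rightarrow> complex \<Rightarrow> complex \<Rightarrow> complex \<Rightarrow> complex \<Rightarrow> complex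
                    \<Rightarrow> complex \<Rightarrow> complex \<Rightarrow> complex \<Rightarrow> cmat" where
  "mat3 a b c d e f g h i = vector [vector [a,b,c], vector [d,e,f], vector [g,h,i]]"

definition diag3 :: "complex \<Rightarrow> complex \<Rightarrow> complex \<Rightarrow> cmat" where
  "diag3 a b c = mat3 a 0 0 0 b 0 0 0 c"

primrec mpow :: "cmat \<Rightarrow> nat \<Rightarrow> cmat" where
  "mpow A 0 = mat 1"
| "mpow A (Suc n) = A ** mpow A n"

inductive_set mgen :: "cmat set \<Rightarrow> cmat set" for S where
  one: "mat 1 \<in> mgen S"
| gen: "A \<in> S \<Longrightarrow> A \<in> mgen S"
| mult: "A \<in> mgen S \<Longrightarrow> B \<in> mgen S \<Longrightarrow> A ** B \<in> mgen S"
| inv: "A \<in> mgen S \<Longrightarrow> matrix_inv A \<in> mgen S"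

definition mgroup :: "cmat set \<Rightarrow> cmat monoid" where
  "mgroup S = \<lparr>carrier = mgen S, mult = (\<lambda>A B. A ** B), one = mat 1\<rparr>"

definition \<omega> :: complex where "\<omega> = cis (2*pi/3)"
definition Jm :: cmat where "Jm = mat3 0 0 1 0 1 0 1 0 0"
definition s2 :: complex where "s2 = complex_of_real (sqrt 2)"

definition G1 :: cmat where
  "G1 = diag3 (cis (7*pi/9)) (- cis (4*pi/9)) (- cis (7*pi/9))"
definition G2 :: cmat where
  "G2 = mat3 (- cis (4*pi/9) / 2) (cis (7*pi/9) / s2) (cis (4*pi/9) / 2)
             (cis (7*pi/9) / s2) 0 (cis (7*pi/9) / s2)
             (cis (4*pi/9) / 2) (cis (7*pi/9) / s2) (- cis (4*pi/9) / 2)"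
definition FUM :: cmat where "FUM = (\<chi> i j. - \<omega> * Jm $ i $ j)"

definition Fr :: "cmat set" where "Fr = mgen {G1, G2, FUM}"

definition Am :: cmat where "Am = G1 ** mpow G2 2 ** matrix_inv G1"
definition Bm :: cmat where "Bm = G1 ** mpow (matrix_inv G2) 2 ** G1"
definition C18 :: cmat where "C18 = Am ** mpow FUM 3"
definition C6 :: cmat where "C6 = Bm ** G1 ** mpow FUM 3 ** matrix_inv G1"
definition H1 :: cmat where
  "H1 = mat3 (-1/2) (-1/s2) (-1/2)  (-1/s2) 0 (1/s2)  (-1/2) (1/s2) (-1/2)"
definition H3 :: cmat where
  "H3 = mat3 (1/2) (1/s2) (-1/2)  (1/s2) 0 (1/s2)  (1/2) (-1/s2) (-1/2)"

definition Fm :: cmat where "Fm = diag3 (cis (pi/9)) (cis (pi/9)) (cis (-2*pi/9))"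
definition Em :: cmat where "Em = mat3 0 1 0 0 0 1 1 0 0"
definition Bt :: cmat where "Bt = mat3 (-1) 0 0 0 0 (-1) 0 (-1) 0"

definition D18 :: "cmat set" where "D18 = mgen {Fm, Em, Bt}"

end

theory Submission imports Defs begin

lemma mat3_nth: "mat3 a b c d e f g h i $ 1 $ 1 = a" "mat3 a b c d e f g h i $ 1 $ 2 = b" "mat3 a b c d e f g h i $ 1 $ 3 = c"
 "mat3 a b c d e f g h i $ 2 $ 1 = d" "mat3 a b c d e f g h i $ 2 $ 2 = e" "mat3 a b c d e f g h i $ 2 $ 3 = f"
 "mat3 a b c d e f g h i $ 3 $ 1 = g" "mat3 a b c d e f g h i $ 3 $ 2 = h" "mat3 a b c d e f g h i $ 3 $ 3 = i"
  by (simp_all add: mat3_def)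

lemma mat3_mult: "mat3 a b c d e f g h i ** mat3 a' b' c' d' e' f' g' h' i' =
  mat3 (a*a'+b*d'+c*g') (a*b'+b*e'+c*h') (a*c'+b*f'+c*i')
       (d*a'+e*d'+f*g') (d*b'+e*e'+f*h') (d*c'+e*f'+f*i')
       (g*a'+h*d'+i*g') (g*b'+h*e'+i*h') (g*c'+h*f'+i*i')"
  by (simp add: vec_eq_iff forall_3 matrix_matrix_mult_def sum_3 mat3_nth)

lemma mat1_3: "(mat 1 :: cmat) = mat3 1 0 0 0 1 0 0 0 1"
  by (simp add: vec_eq_iff forall_3 mat_def mat3_nth)

lemma mat3_eq: "mat3 a b c d e f g h i = mat3 a' b' c' d' e' f' g' h' i' \<longleftrightarrow>
  a=a' \<and> b=b' \<and> c=c' \<and> d=d' \<and> e=e' \<and> f=f' \<and> g=g' \<and> h=h' \<and> i=i'"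
  by (metis mat3_nth)

definition z :: complex where "z = cis (pi/9)"
lemma z18: "z^18 = 1"
proof -
  have "z^18 = cis (real 18 * (pi/9))" unfolding z_def by (rule Complex.DeMoivre)
  also have "real 18 * (pi/9) = 2*pi" by simp
  finally show ?thesis by simp
qed
lemma zred: "18 \<le> n \<Longrightarrow> z^n = z^(n-18)"
  by (metis le_add_diff_inverse mult_1 power_add z18)
lemma zcis: "cis (real k * pi / 9) = z ^ k" unfolding z_def by (simp add: Complex.DeMoivre)

lemma "mat3 (z^3) 0 0 0 0 (z^5) 0 (z^9) 0 ** mat3 (z^17) 0 0 0 0 (z^5) 0 (z^9) 0 = mat3 (z^2) 0 0 0 (z^14) 0 0 0 (z^14)"
  by (simp add: mat3_mult power_add[symmetric] zred)
lemma s2sq: "s2 * s2 = 2" unfolding s2_def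
  unfolding s2_def of_real_mult[symmetric] by simp
lemma s2nz: "s2 \<noteq> 0" using s2sq by auto
lemma z9: "z^9 = -1"
proof -
  have "z^9 = cis (real 9 * (pi/9))" unfolding z_def by (rule Complex.DeMoivre)
  then show ?thesis by simp
qed
lemma zc: "cis (4*pi/9) = z^4" "cis (7*pi/9) = z^7"
  using zcis[of 4] zcis[of 7] by simp_all
definition Pm :: cmat where "Pm = mat3 0 s2 0 1 0 (-1) 1 0 1"
definition Qm :: cmat where "Qm = mat3 0 (1/2) (1/2) (s2/2) 0 0 0 (-1/2) (1/2)"
lemma PQ: "Pm ** Qm = mat 1" "Qm ** Pm = mat 1"
  by (simp_all add: Pm_def Qm_def mat3_mult mat1_3 s2sq)
lemma s2sq': "s2 * (s2 * x) = 2 * x" by (simp add: s2sq mult.assoc[symmetric])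
lemma cG1: "Pm ** G1 ** Qm = mat3 (-(z^4)) 0 0 0 0 (z^7) 0 (z^7) 0"
  apply (simp add: Pm_def Qm_def G1_def diag3_def mat3_mult zc)
  apply (simp add: mat3_eq algebra_simps s2sq s2sq')
  done
lemma s2div: "x / s2 = x * s2 / 2" using s2sq s2nz by (simp add: field_simps)
lemma cG2: "Pm ** G2 ** Qm = mat3 0 0 (z^7) 0 (-(z^4)) 0 (z^7) 0 0"
  apply (simp add: Pm_def Qm_def G2_def mat3_mult zc s2div)
  apply (simp add: mat3_eq algebra_simps s2sq s2sq')
  done

lemma zc2: "cis (2*pi/3) = z^6" using zcis[of 6] by simp
lemma cFUM: "Pm ** FUM ** Qm = mat3 (-(z^6)) 0 0 0 (z^6) 0 0 0 (-(z^6))"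
proof -
  have fe: "FUM = mat3 0 0 (-(z^6)) 0 (-(z^6)) 0 (-(z^6)) 0 0"
    by (simp add: FUM_def Jm_def \<omega>_def zc2 vec_eq_iff forall_3 mat3_nth)
  show ?thesis unfolding fe
  apply (simp add: Pm_def Qm_def mat3_mult)
  apply (simp add: mat3_eq algebra_simps s2sq s2sq')
  done
qed
lemma cH1: "Pm ** H1 ** Qm = mat3 0 (-1) 0 (-1) 0 0 0 0 (-1)"
  apply (simp add: Pm_def Qm_def H1_def mat3_mult s2div)
  apply (simp add: mat3_eq algebra_simps s2sq s2sq')
  done
lemma cH3: "Pm ** H3 ** Qm = mat3 0 0 1 1 0 0 0 1 0"
  apply (simp add: Pm_def Qm_def H3_def mat3_mult s2div)
  apply (simp add: mat3_eq algebra_simps s2sq s2sq')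
  done

lemma zneg: "-(z^k) = z^(k+9)" "- 1 = z^9" by (simp_all add: power_add z9)
lemma zmul: "z^a * z^b = z^(a+b)" "z * z^b = z^(Suc b)" "z^a * z = z^(Suc a)" "z * z = z^2"
  by (simp_all add: power_add power2_eq_square)
lemma zmul2: "z^a * (z^b * x) = z^(a+b) * x" "z * (z^b * x) = z^(Suc b) * x" "z^a * (z * x) = z^(Suc a) * x" "z * (z * x) = z^2 * x"
  by (simp_all add: power_add power2_eq_square mult.assoc)
lemmas zsimps = zmul zmul2 zred

lemma Fm_z: "Fm = mat3 z 0 0 0 z 0 0 0 (z^16)"
proof -
  have "cis (-2*pi/9) * cis (2*pi) = cis (real 16 * pi / 9)"
    unfolding cis_mult by (rule arg_cong[where f=cis]) simp
  then have "cis (-2*pi/9) = z^16" using zcis[of 16] by simp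
  then show ?thesis by (simp add: Fm_def diag3_def z_def)
qed
lemma Bt_z: "Bt = mat3 (z^9) 0 0 0 0 (z^9) 0 (z^9) 0" by (simp add: Bt_def z9)

lemma w1: "Fm ** Fm ** Bt ** Fm ** Fm = mat3 (z^13) 0 0 0 0 (z^7) 0 (z^7) 0"
  by (simp add: Fm_z Bt_z mat3_mult zsimps)
lemma w2: "Fm ** Fm ** Em ** Bt ** Fm ** Fm = mat3 0 0 (z^7) 0 (z^13) 0 (z^7) 0 0"
  by (simp add: Fm_z Bt_z Em_def mat3_mult zsimps)

definition mmono :: "(3 \<Rightarrow> 3) \<Rightarrow> (3 \<Rightarrow> complex) \<Rightarrow> cmat" where
  "mmono s d = (\<chi> i j. if j = s i then d i else 0)"
definition Mon :: "cmat \<Rightarrow> bool" where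
  "Mon Y \<longleftrightarrow> (\<exists>s d k. inj s \<and> (\<forall>i. d i ^ 6 = z^(6*k)) \<and> Y = mmono s d)"
definition psi :: "cmat \<Rightarrow> complex" where
  "psi Y = (\<Sum>i\<in>UNIV. \<Sum>j\<in>UNIV. (Y$i$j)^6) / 3"
definition tw :: "cmat \<Rightarrow> cmat" where
  "tw Y = (\<chi> i j. (psi Y)^2 * Y$i$j)"

lemma mmono_mult: "mmono s d ** mmono t e = mmono (t \<circ> s) (\<lambda>i. d i * e (s i))"
proof -
  have "\<And>i j. (\<Sum>k\<in>UNIV. (if k = s i then d i else 0) * (if j = t k then e k else 0))
      = (if j = t (s i) then d i * e (s i) else 0)"
  proof -
    fix i j
    have "(\<Sum>k\<in>UNIV. (if k = s i then d i else 0) * (if j = t k then e k else 0))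
       = (\<Sum>k\<in>UNIV. if k = s i then d i * (if j = t k then e k else 0) else 0)"
      by (rule sum.cong) auto
    also have "\<dots> = d i * (if j = t (s i) then e (s i) else 0)"
      by (simp add: sum.delta')
    finally show "?thesis i j" by simp
  qed
  then show ?thesis by (simp add: mmono_def matrix_matrix_mult_def vec_eq_iff)
qed

lemma psi_mmono: assumes "\<And>i. d i ^ 6 = c" shows "psi (mmono s d) = c"
proof -
  have "\<And>i. (\<Sum>j\<in>UNIV. ((if j = s i then d i else 0)::complex)^6) = c"
  proof -
    fix i
    have "(\<Sum>j\<in>UNIV. ((if j = s i then d i else 0)::complex)^6) = (\<Sum>j\<in>UNIV. if j = s i then d i ^ 6 else 0)"
      by (rule sum.cong) auto
    then show "?thesis i" by (simp add: sum.delta' assms)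
  qed
  then show ?thesis by (simp add: psi_def mmono_def sum_3)
qed

lemma z_nz: "z \<noteq> 0" using z18 by auto
lemma z18k: "z^(18*k) = 1" by (simp add: power_mult z18)

lemma Mon_mult: assumes "Mon A" "Mon B" shows "Mon (A ** B)" "psi (A ** B) = psi A * psi B"
proof -
  obtain s d k where A: "inj s" "\<And>i. d i ^ 6 = z^(6*k)" "A = mmono s d" using assms(1) Mon_def by auto
  obtain t e l where B: "inj t" "\<And>i. e i ^ 6 = z^(6*l)" "B = mmono t e" using assms(2) Mon_def by auto
  have AB: "A ** B = mmono (t \<circ> s) (\<lambda>i. d i * e (s i))" using A B mmono_mult by simp
  have p: "\<And>i. (d i * e (s i))^6 = z^(6*(k+l))" by (simp add: power_mult_distrib A B power_add)
  show "Mon (A ** B)" unfolding Mon_def AB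
    by (rule exI[of _ "t \<circ> s"], rule exI[of _ "\<lambda>i. d i * e (s i)"], rule exI[of _ "k+l"])
       (use p inj_compose[OF B(1) A(1)] in auto)
  show "psi (A ** B) = psi A * psi B" unfolding AB using psi_mmono[OF p] A(2,3) B(2,3) psi_mmono
    by (simp add: power_add)
qed

lemma mmono_id: "mmono id (\<lambda>_. 1) = mat 1"
  by (simp add: mmono_def mat_def vec_eq_iff)

lemma minv_unique: assumes "A ** B = mat 1" "B ** A = mat 1" shows "matrix_inv A = B"
proof -
  have "\<exists>A'. A ** A' = mat 1 \<and> A' ** A = mat 1" using assms by blast
  then have "A ** matrix_inv A = mat 1 \<and> matrix_inv A ** A = mat 1"
    unfolding matrix_inv_def by (rule someI_ex)
  then have "matrix_inv A = matrix_inv A ** (A ** B)" using assms by simp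
  also have "\<dots> = B" using \<open>A ** matrix_inv A = mat 1 \<and> matrix_inv A ** A = mat 1\<close>
    by (simp add: matrix_mul_assoc)
  finally show ?thesis .
qed

lemma Mon_inv: assumes "Mon A"
  shows "\<exists>B. A ** B = mat 1 \<and> B ** A = mat 1 \<and> Mon B"
proof -
  obtain s d k where A: "inj s" "\<And>i. d i ^ 6 = z^(6*k)" "A = mmono s d" using assms Mon_def by auto
  have sj: "surj s" using finite_UNIV_inj_surj[OF finite_class.finite_UNIV A(1)] .
  have dnz: "\<And>i. d i \<noteq> 0" using A(2) z_nz by (metis power_not_zero zero_power zero_less_Suc numeral_eq_Suc)
  define B where "B = mmono (Hilbert_Choice.inv s) (\<lambda>i. inverse (d (Hilbert_Choice.inv s i)))"
  have "A ** B = mmono (Hilbert_Choice.inv s \<circ> s) (\<lambda>i. d i * inverse (d (Hilbert_Choice.inv s (s i))))"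
    unfolding A(3) B_def mmono_mult by simp
  also have "\<dots> = mat 1" using A(1) dnz by (simp add: mmono_id[symmetric] inv_o_cancel cong: if_cong)
  finally have 1: "A ** B = mat 1" .
  have "B ** A = mmono (s \<circ> Hilbert_Choice.inv s) (\<lambda>i. inverse (d (Hilbert_Choice.inv s i)) * d (Hilbert_Choice.inv s i))"
    unfolding A(3) B_def mmono_mult by simp
  also have "\<dots> = mat 1" using sj dnz by (simp add: mmono_id[symmetric] surj_iff)
  finally have 2: "B ** A = mat 1" .
  have "\<And>i. (inverse (d (Hilbert_Choice.inv s i)))^6 = z^(6*(2*k))"
  proof -
    fix i
    have "z^(6*k) * z^(6*(2*k)) = 1" using z18k[of k] by (simp flip: power_add)
    then have "inverse (z^(6*k)) = z^(6*(2*k))" by (metis inverse_unique)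
    then show "?thesis i" by (simp add: power_inverse A(2))
  qed
  moreover have "inj (Hilbert_Choice.inv s)" using sj by (simp add: surj_imp_inj_inv)
  ultimately have "Mon B" unfolding Mon_def B_def
    by (intro exI[of _ "Hilbert_Choice.inv s"] exI[of _ "\<lambda>i. inverse (d (Hilbert_Choice.inv s i))"] exI[of _ "2*k"]) auto
  then show ?thesis using 1 2 by blast
qed

abbreviation K where "K \<equiv> mgen {Fm, Em, Bt}"

lemma Mon_Fm: "Mon Fm"
proof -
  have "Fm = mmono id (\<lambda>i. if i = 3 then z^16 else z)"
    by (simp add: Fm_z vec_eq_iff forall_3 mmono_def mat3_nth)
  moreover have "\<forall>i::3. (if i = 3 then z^16 else z)^6 = z^(6*1)"
    by (simp add: power_mult[symmetric] zred)
  ultimately show ?thesis unfolding Mon_def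
    by (intro exI[of _ id] exI[of _ "\<lambda>i::3. if i = 3 then z^16 else z"] exI[of _ 1]) auto
qed
lemma Mon_Em: "Mon Em"
proof -
  have "Em = mmono (\<lambda>i. i + 1) (\<lambda>_. 1)"
    by (simp add: Em_def vec_eq_iff forall_3 mmono_def mat3_nth)
  moreover have "inj (\<lambda>i::3. i + 1)" by (simp add: inj_def)
  ultimately show ?thesis unfolding Mon_def by (intro exI[of _ "\<lambda>i::3. i + 1"] exI[of _ "\<lambda>_. 1"] exI[of _ 0]) auto
qed
lemma Mon_Bt: "Mon Bt"
proof -
  have "Bt = mmono (\<lambda>i. 2 - i) (\<lambda>_. z^9)"
    by (simp add: Bt_z vec_eq_iff forall_3 mmono_def mat3_nth)
  moreover have "inj (\<lambda>i::3. 2 - i)" by (simp add: inj_def)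
  moreover have "(z^9)^6 = z^(6*0)" by (simp add: power_mult[symmetric] zred)
  ultimately show ?thesis unfolding Mon_def by (intro exI[of _ "\<lambda>i::3. 2 - i"] exI[of _ "\<lambda>_. z^9"] exI[of _ 0]) auto
qed
lemma Mon_one: "Mon (mat 1)"
  unfolding Mon_def mmono_id[symmetric] by (intro exI[of _ id] exI[of _ "\<lambda>_. 1"] exI[of _ 0]) auto

lemma K_Mon: "Y \<in> K \<Longrightarrow> Mon Y"
proof (induction rule: mgen.induct)
  case one then show ?case by (rule Mon_one)
next
  case (gen A) then show ?case using Mon_Fm Mon_Em Mon_Bt by auto
next
  case (mult A B) then show ?case using Mon_mult by blast
next
  case (inv A)
  obtain B where B: "A ** B = mat 1" "B ** A = mat 1" "Mon B" using Mon_inv[OF inv.IH] by blast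
  then show ?case using minv_unique[OF B(1,2)] by simp
qed

lemma Mon_psi: "Mon Y \<Longrightarrow> \<exists>k. psi Y = z^(6*k)"
  unfolding Mon_def using psi_mmono by blast

lemma psi_scale: "psi (\<chi> i j. c * Y$i$j) = c^6 * psi Y"
  by (simp add: psi_def sum_3 power_mult_distrib algebra_simps)

lemma tw_nth: "tw Y $ i $ j = psi Y ^ 2 * Y $ i $ j" by (simp add: tw_def)

lemma psi_tw: assumes "Mon Y" shows "psi (tw Y) = psi Y"
proof -
  obtain k where k: "psi Y = z^(6*k)" using Mon_psi[OF assms] by blast
  have e: "6*k*2*6 = 18*(4*k)" by simp
  have "(psi Y ^ 2)^6 = 1" unfolding k power_mult[symmetric] e z18k ..
  then show ?thesis unfolding tw_def psi_scale by simp
qed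

lemma mat_nth: "(mat c ** Y) $ i $ j = c * Y $ i $ j"
proof -
  have "(\<Sum>k\<in>UNIV. (if i = k then c else 0) * Y $ k $ j) = (\<Sum>k\<in>UNIV. if i = k then c * Y $ i $ j else 0)"
    by (rule sum.cong) auto
  then show ?thesis by (simp add: matrix_matrix_mult_def mat_def)
qed
lemma mat_mat: "mat a ** mat b = (mat (a*b) :: cmat)"
  by (simp add: vec_eq_iff mat_nth) (simp add: mat_def)
lemma mpow_mat: "mpow (mat c) n = mat (c^n)"
  by (induction n) (simp_all add: mat_mat)
lemma mgen_mpow: "A \<in> mgen S \<Longrightarrow> mpow A n \<in> mgen S"
  by (induction n) (auto intro: mgen.intros)
lemma mpow_numeral: "mpow A (numeral n) = A ** mpow A (pred_numeral n)"
  by (simp add: numeral_eq_Suc)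
lemma mpow_1: "mpow A 1 = A" by simp
lemma mat3_mat: "(mat c :: cmat) = mat3 c 0 0 0 c 0 0 0 c"
  by (simp add: vec_eq_iff forall_3 mat_def mat3_nth)

lemma Fm6: "mpow Fm 6 = mat (z^6)"
  by (simp add: mpow_numeral Fm_z mat3_mult mat1_3 mat3_mat zsimps)

lemma tw_mult: assumes "Mon A" "Mon B" shows "tw (A ** B) = tw A ** tw B"
proof -
  have p: "psi (A ** B) = psi A * psi B" using Mon_mult assms by blast
  have "\<And>i j. tw (A ** B) $ i $ j = (tw A ** tw B) $ i $ j"
  proof -
    fix i j
    have "tw (A ** B) $ i $ j = (psi A * psi B)^2 * (A ** B) $ i $ j" by (simp only: tw_nth p)
    also have "\<dots> = (tw A ** tw B) $ i $ j"
      by (simp add: matrix_matrix_mult_def tw_nth sum_distrib_left power_mult_distrib algebra_simps)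
    finally show "?thesis i j" .
  qed
  then show ?thesis by (simp add: vec_eq_iff)
qed

lemma tw_K: assumes "Y \<in> K" shows "tw Y \<in> K"
proof -
  obtain k where k: "psi Y = z^(6*k)" using Mon_psi[OF K_Mon[OF assms]] by blast
  have "tw Y = mat (psi Y ^ 2) ** Y" by (simp add: vec_eq_iff tw_nth mat_nth)
  also have "\<dots> = mpow (mpow Fm 6) (2*k) ** Y"
    unfolding Fm6 mpow_mat k by (simp add: power_mult[symmetric] mult.commute mult.left_commute)
  finally show ?thesis using assms by (auto intro: mgen.intros mgen_mpow)
qed

lemma tw3: assumes "Y \<in> K" shows "tw (tw (tw Y)) = Y"
proof -
  obtain k where k: "psi Y = z^(6*k)" using Mon_psi[OF K_Mon[OF assms]] by blast
  have t1: "psi (tw Y) = psi Y" using psi_tw K_Mon assms by blast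
  have t2: "psi (tw (tw Y)) = psi Y" using psi_tw K_Mon tw_K assms t1 by metis
  have e: "6*k*2*3 = 18*(2*k)" by simp
  have "(psi Y ^ 2)^3 = 1" unfolding k power_mult[symmetric] e z18k ..
  then show ?thesis unfolding vec_eq_iff tw_nth t1 t2
    by (simp add: mult.assoc[symmetric] power_mult[symmetric])
qed

lemma tw_bij: "bij_betw tw K K"
proof (rule bij_betw_imageI)
  show "inj_on tw K"
  proof (rule inj_onI)
    fix A B assume A: "A \<in> K" and B: "B \<in> K" and eq: "tw A = tw B"
    have "psi A = psi B" using psi_tw K_Mon A B eq by metis
    moreover obtain k where k: "psi A = z^(6*k)" using Mon_psi[OF K_Mon[OF A]] by blast
    ultimately have nz: "psi A \<noteq> 0" "psi B = psi A" using z_nz by auto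
    show "A = B" using eq nz unfolding vec_eq_iff tw_nth by simp
  qed
  show "tw ` K = K"
  proof
    show "tw ` K \<subseteq> K" using tw_K by auto
    show "K \<subseteq> tw ` K"
    proof
      fix Y assume "Y \<in> K"
      then have "Y = tw (tw (tw Y))" "tw (tw Y) \<in> K" using tw3 tw_K by auto
      then show "Y \<in> tw ` K" by blast
    qed
  qed
qed

definition cj :: "cmat \<Rightarrow> cmat" where "cj X = Pm ** X ** Qm"
abbreviation F1 where "F1 \<equiv> mgen {G1, G2, FUM}"

lemma QPX: "Qm ** (Pm ** X) = X" by (simp add: matrix_mul_assoc PQ)
lemma PQX: "Pm ** (Qm ** X) = X" by (simp add: matrix_mul_assoc PQ)
lemma cj_mult: "cj (A ** B) = cj A ** cj B"
  by (simp add: cj_def matrix_mul_assoc[symmetric] QPX)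
lemma cj_one: "cj (mat 1) = mat 1" by (simp add: cj_def PQ)
lemma cj_back: "Qm ** cj A ** Pm = A"
  by (simp add: cj_def matrix_mul_assoc[symmetric] QPX) (simp add: matrix_mul_assoc PQ)
lemma cj_inj: "cj A = cj B \<Longrightarrow> A = B" by (metis cj_back)
lemma cj_mpow: "cj (mpow A n) = mpow (cj A) n"
  by (induction n) (simp_all add: cj_one cj_mult)

lemma inv_props: "invertible (A::cmat) \<Longrightarrow> A ** matrix_inv A = mat 1 \<and> matrix_inv A ** A = mat 1"
  unfolding invertible_def matrix_inv_def by (rule someI_ex)
lemma invertibleI: "(A::cmat) ** B = mat 1 \<Longrightarrow> B ** A = mat 1 \<Longrightarrow> invertible A"
  unfolding invertible_def by blast
lemma cj_minv: assumes "invertible A" shows "cj (matrix_inv A) = matrix_inv (cj A)"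
proof -
  have "cj A ** cj (matrix_inv A) = mat 1" "cj (matrix_inv A) ** cj A = mat 1"
    using inv_props[OF assms] by (simp_all add: cj_mult[symmetric] cj_one)
  then have "matrix_inv (cj A) = cj (matrix_inv A)" by (rule minv_unique)
  then show ?thesis by simp
qed
lemma inv_from_cj: assumes "cj X ** B = mat 1" "B ** cj X = mat 1" shows "invertible X"
proof (rule invertibleI)
  have "X ** (Qm ** B ** Pm) = (Qm ** cj X ** Pm) ** (Qm ** B ** Pm)" by (simp only: cj_back)
  also have "\<dots> = Qm ** ((cj X ** B) ** Pm)" by (simp only: matrix_mul_assoc[symmetric] PQX)
  finally show "X ** (Qm ** B ** Pm) = mat 1" using assms(1) by (simp add: PQ)
  have "(Qm ** B ** Pm) ** X = (Qm ** B ** Pm) ** (Qm ** cj X ** Pm)" by (simp only: cj_back)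
  also have "\<dots> = Qm ** ((B ** cj X) ** Pm)" by (simp only: matrix_mul_assoc[symmetric] PQX)
  finally show "(Qm ** B ** Pm) ** X = mat 1" using assms(2) by (simp add: PQ)
qed
lemma Mon_invertible: "Mon Y \<Longrightarrow> invertible Y" using Mon_inv invertibleI by blast

lemma cG1z: "cj G1 = mat3 (z^13) 0 0 0 0 (z^7) 0 (z^7) 0" by (simp add: cj_def cG1 zneg)
lemma cG2z: "cj G2 = mat3 0 0 (z^7) 0 (z^13) 0 (z^7) 0 0" by (simp add: cj_def cG2 zneg)
lemma cFUMz: "cj FUM = mat3 (z^15) 0 0 0 (z^6) 0 0 0 (z^15)" by (simp add: cj_def cFUM zneg)

lemma w3: "Fm ** Fm ** Fm ** Em ** Em ** Fm ** Fm ** Fm ** Em = mat3 (z^15) 0 0 0 (z^6) 0 0 0 (z^15)"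
  by (simp add: Fm_z Em_def mat3_mult zsimps)
lemma v1: "cj (G1 ** FUM ** G1 ** G2 ** G2) = Fm"
  by (simp add: cj_mult cG1z cG2z cFUMz Fm_z mat3_mult zsimps)
lemma v2: "cj (G2 ** G1 ** G1 ** G2 ** G2 ** G1 ** FUM ** FUM) = Em"
  by (simp add: cj_mult cG1z cG2z cFUMz Em_def mat3_mult zsimps)
lemma v3: "cj (G1 ** G1 ** G1 ** FUM ** FUM ** FUM ** FUM) = Bt"
  by (simp add: cj_mult cG1z cG2z cFUMz Bt_z mat3_mult zsimps)

lemma cj_gen: "X \<in> {G1, G2, FUM} \<Longrightarrow> cj X \<in> K"
proof -
  have m: "\<And>A B. A \<in> K \<Longrightarrow> B \<in> K \<Longrightarrow> A ** B \<in> K" by (rule mgen.mult)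
  have g: "Fm \<in> K" "Em \<in> K" "Bt \<in> K" by (auto intro: mgen.gen)
  have "cj G1 = Fm ** Fm ** Bt ** Fm ** Fm" using cG1z w1 by simp
  moreover have "cj G2 = Fm ** Fm ** Em ** Bt ** Fm ** Fm" using cG2z w2 by simp
  moreover have "cj FUM = Fm ** Fm ** Fm ** Em ** Em ** Fm ** Fm ** Fm ** Em" using cFUMz w3 by simp
  ultimately have "cj G1 \<in> K" "cj G2 \<in> K" "cj FUM \<in> K" by (simp_all, (intro m g)+)
  moreover assume "X \<in> {G1, G2, FUM}"
  ultimately show ?thesis by auto
qed

lemma F1_K: "X \<in> F1 \<Longrightarrow> cj X \<in> K \<and> invertible X"
proof (induction rule: mgen.induct)
  case one then show ?case using cj_one invertibleI by (auto intro: mgen.one)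
next
  case (gen A)
  then have c: "cj A \<in> K" by (rule cj_gen)
  then obtain B where "cj A ** B = mat 1" "B ** cj A = mat 1" using Mon_inv K_Mon by blast
  then show ?case using c inv_from_cj by blast
next
  case (mult A B)
  then show ?case using cj_mult invertible_mult by (auto intro: mgen.mult)
next
  case (inv A)
  then have "cj (matrix_inv A) = matrix_inv (cj A)" using cj_minv by blast
  moreover have "invertible (matrix_inv A)" using inv_props[of A] inv invertibleI by blast
  ultimately show ?case using inv by (auto intro: mgen.inv)
qed

lemma K_F1: "Y \<in> K \<Longrightarrow> \<exists>X\<in>F1. Y = cj X"
proof (induction rule: mgen.induct)
  case one then show ?case by (rule bexI[of _ "mat 1"]) (auto simp: cj_one intro: mgen.one)
next
  case (gen A)
  have "G1 ** FUM ** G1 ** G2 ** G2 \<in> F1" "G2 ** G1 ** G1 ** G2 ** G2 ** G1 ** FUM ** FUM \<in> F1"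
    "G1 ** G1 ** G1 ** FUM ** FUM ** FUM ** FUM \<in> F1"
  proof -
    have m: "\<And>A B. A \<in> F1 \<Longrightarrow> B \<in> F1 \<Longrightarrow> A ** B \<in> F1" by (rule mgen.mult)
    have g: "G1 \<in> F1" "G2 \<in> F1" "FUM \<in> F1" by (auto intro: mgen.gen)
    show "G1 ** FUM ** G1 ** G2 ** G2 \<in> F1" "G2 ** G1 ** G1 ** G2 ** G2 ** G1 ** FUM ** FUM \<in> F1"
    "G1 ** G1 ** G1 ** FUM ** FUM ** FUM ** FUM \<in> F1" by (intro m g)+
  qed
  then show ?case using gen v1 v2 v3 by (metis insert_iff empty_iff)
next
  case (mult A B)
  then show ?case using cj_mult by (metis mgen.mult)
next
  case (inv A)
  then obtain X where X: "X \<in> F1" "A = cj X" by blast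
  then have "matrix_inv A = cj (matrix_inv X)" using F1_K cj_minv by metis
  then show ?case using X by (auto intro: mgen.inv)
qed

lemma g_iso: "(\<lambda>X. tw (cj X)) \<in> iso (mgroup {G1, G2, FUM}) (mgroup {Fm, Em, Bt})"
proof -
  have cjb: "bij_betw cj F1 K"
  proof (rule bij_betw_imageI)
    show "inj_on cj F1" using cj_inj by (auto intro: inj_onI)
    show "cj ` F1 = K" using F1_K K_F1 by blast
  qed
  have b: "bij_betw (\<lambda>X. tw (cj X)) F1 K"
    using bij_betw_trans[OF cjb tw_bij] by (simp add: comp_def)
  have h: "(\<lambda>X. tw (cj X)) \<in> F1 \<rightarrow> K" using F1_K tw_K by blast
  have m: "\<forall>x\<in>F1. \<forall>y\<in>F1. tw (cj (x ** y)) = tw (cj x) ** tw (cj y)"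
    using F1_K K_Mon tw_mult cj_mult by metis
  show ?thesis unfolding iso_def hom_def mgroup_def using b h m by simp
qed

lemma psi_mat3: "psi (mat3 a b c d e f g h i) = (a^6+b^6+c^6+d^6+e^6+f^6+g^6+h^6+i^6)/3"
  by (simp add: psi_def sum_3 mat3_nth algebra_simps)
lemma tw_mat3: "tw (mat3 a b c d e f g h i) = (let p = psi (mat3 a b c d e f g h i) in
  mat3 (p^2*a) (p^2*b) (p^2*c) (p^2*d) (p^2*e) (p^2*f) (p^2*g) (p^2*h) (p^2*i))"
  by (simp add: vec_eq_iff forall_3 tw_nth mat3_nth Let_def)
lemma zpow: "(z^a)^b = z^(a*b)" by (simp add: power_mult)
lemma three: "(x + x + x) / 3 = (x::complex)" by simp

lemma G1_inv: "invertible G1" "invertible G2" using F1_K by (auto intro: mgen.gen)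
lemma cG1i: "matrix_inv (cj G1) = mat3 (z^5) 0 0 0 0 (z^11) 0 (z^11) 0"
  by (rule minv_unique) (simp_all add: cG1z mat3_mult mat1_3 zsimps)
lemma cG2i: "matrix_inv (cj G2) = mat3 0 0 (z^11) 0 (z^5) 0 (z^11) 0 0"
  by (rule minv_unique) (simp_all add: cG2z mat3_mult mat1_3 zsimps)

lemma cjH3: "cj H3 = mpow Em 2" by (simp add: cj_def cH3 mpow_numeral Em_def mat3_mult mat1_3)
lemma cjH1: "cj H1 = Bt ** Em" by (simp add: cj_def cH1 Bt_def Em_def mat3_mult)
lemma cjC18: "cj C18 = mat3 (z^5) 0 0 0 (z^14) 0 0 0 (z^17)"
  apply (simp only: C18_def Am_def cj_mult cj_mpow cj_minv[OF G1_inv(1)])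
  apply (simp only: cG1i)
  apply (simp add: cG1z cG2z cFUMz mpow_numeral mat3_mult mat1_3 zsimps)
  done
lemma cjC6: "cj C6 = mat3 (z^3) 0 0 0 (z^9) 0 0 0 (z^6)"
  apply (simp only: C6_def Bm_def cj_mult cj_mpow cj_minv[OF G1_inv(1)] cj_minv[OF G1_inv(2)])
  apply (simp only: cG1i cG2i)
  apply (simp add: cG1z cG2z cFUMz mpow_numeral mat3_mult mat1_3 zsimps)
  done

lemma zcisneg: "cis (-7*pi/9) = z^11"
proof -
  have "cis (-7*pi/9) * cis (2*pi) = cis (real 11 * pi / 9)"
    unfolding cis_mult by (rule arg_cong[where f=cis]) simp
  then show ?thesis using zcis[of 11] by simp
qed
lemma zcs: "cis (2*pi/9) = z^2" "cis (5*pi/9) = z^5" "cis (pi/3) = z^3" "cis (2*pi/3) = z^6"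
  using zcis[of 2] zcis[of 5] zcis[of 3] zcis[of 6] by simp_all

theorem theorem8:
  shows "\<exists>g. g \<in> iso (mgroup {G1, G2, FUM}) (mgroup {Fm, Em, Bt})
            \<and> g H3 = mpow Em 2
            \<and> g H1 = Bt ** Em
            \<and> g C18 = diag3 (cis (-7*pi/9)) (cis (2*pi/9)) (cis (5*pi/9))
            \<and> g C6 = diag3 (cis (pi/3)) (-1) (cis (2*pi/3))
            \<and> g C18 = mpow Fm 2 ** mpow (mpow Em 2 ** Fm ** Em ** matrix_inv Fm) 3
            \<and> g C6 = Em ** g C18 ** matrix_inv (mpow Em 2) ** mpow (g C18) 8
                       ** matrix_inv (mpow Em 2) ** mpow (g C18) 3"
proof -
  define g where "g = (\<lambda>X. tw (cj X))"
  have gC18: "g C18 = mat3 (z^11) 0 0 0 (z^2) 0 0 0 (z^5)"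
    by (simp add: g_def cjC18 tw_mat3 psi_mat3 zpow zsimps three Let_def)
  have gC6: "g C6 = mat3 (z^3) 0 0 0 (z^9) 0 0 0 (z^6)"
    by (simp add: g_def cjC6 tw_mat3 psi_mat3 zpow zsimps three Let_def)
  have gH3: "g H3 = mpow Em 2"
    by (simp add: g_def cjH3 mpow_numeral Em_def mat3_mult mat1_3 tw_mat3 psi_mat3 Let_def)
  have gH1: "g H1 = Bt ** Em"
    by (simp add: g_def cjH1 Bt_def Em_def mat3_mult tw_mat3 psi_mat3 Let_def)
  have d1: "diag3 (cis (-7*pi/9)) (cis (2*pi/9)) (cis (5*pi/9)) = mat3 (z^11) 0 0 0 (z^2) 0 0 0 (z^5)"
    using zcisneg by (simp add: diag3_def zcs)
  have d2: "diag3 (cis (pi/3)) (-1) (cis (2*pi/3)) = mat3 (z^3) 0 0 0 (z^9) 0 0 0 (z^6)"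
    by (simp add: diag3_def zcs z9)
  have Fi: "matrix_inv Fm = mat3 (z^17) 0 0 0 (z^17) 0 0 0 (z^2)"
    by (rule minv_unique) (simp_all add: Fm_z mat3_mult mat1_3 zsimps)
  have Ei: "matrix_inv (mpow Em 2) = Em"
    by (rule minv_unique) (simp_all add: Em_def mpow_numeral mat3_mult mat1_3)
  have c5: "mpow Fm 2 ** mpow (mpow Em 2 ** Fm ** Em ** matrix_inv Fm) 3 = mat3 (z^11) 0 0 0 (z^2) 0 0 0 (z^5)"
    unfolding Fi by (simp add: Fm_z Em_def mpow_numeral mat3_mult mat1_3 zsimps)
  have c6: "Em ** g C18 ** matrix_inv (mpow Em 2) ** mpow (g C18) 8
                       ** matrix_inv (mpow Em 2) ** mpow (g C18) 3 = mat3 (z^3) 0 0 0 (z^9) 0 0 0 (z^6)"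
    unfolding Ei gC18 by (simp add: Em_def mpow_numeral mat3_mult mat1_3 zsimps)
  show ?thesis
    by (rule exI[of _ g]) (simp only: g_iso[folded g_def] gH3 gH1 gC18 gC6 d1 d2 c5 c6[unfolded gC18] simp_thms)
qed
end
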